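(* With $F_n$ as defined in the context, $$\int_{1+\frac{(\log n)^2}{n}}^{1+(\log n)^{-1}}F_n(w)\,dw\sim\tfrac12\,n\log n\qquad(n\to\infty).$$
   Context: For $w>0$ and integer $n\ge1$ let $a_n(w)=\sum_{j=0}^n w^j$, $b_n(w)=\sum_{j=1}^n jw^j$, $c_n(w)=\sum_{j=0}^n j^2w^j$, and $$F_n(w)=\frac{1}{2\sqrt{w}}\sqrt{\frac{c_n(w)}{a_n(w)}}\sqrt{\frac{a_n(w)c_n(w)-b_n(w)^2}{w\,a_n(w)^2}}.$$ $\log$ is the natural logarithm. *)

theory Defs
  imports "HOL-Analysis.Analysis" "HOL-Library.Landau_Symbols"
begin

definition a_n :: "nat \<Rightarrow> real \<Rightarrow> real" where
  "a_n n w = (\<Sum>j=0..n. w ^ j)"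

definition b_n :: "nat \<Rightarrow> real \<Rightarrow> real" where
  "b_n n w = (\<Sum>j=1..n. real j * w ^ j)"

definition c_n :: "nat \<Rightarrow> real \<Rightarrow> real" where
  "c_n n w = (\<Sum>j=0..n. (real j)^2 * w ^ j)"

definition F_n :: "nat \<Rightarrow> real \<Rightarrow> real" where
  "F_n n w = 1 / (2 * sqrt w) * sqrt (c_n n w / a_n n w)
     * sqrt ((a_n n w * c_n n w - (b_n n w)^2) / (w * (a_n n w)^2))"

end

theory Submission
  imports Defs "HOL-Real_Asymp.Real_Asymp"
begin

lemma a_closed: "(w-1) * a_n n w = w^Suc n - 1"
  by (induction n) (auto simp: a_n_def algebra_simps)

lemma b_closed: "(w-1)^2 * b_n n w = w^Suc n * (real n * w - real n - 1) + w"
proof (induction n)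
  case 0 then show ?case by (simp add: b_n_def)
next
  case (Suc n)
  have "b_n (Suc n) w = b_n n w + real (Suc n) * w^Suc n" by (simp add: b_n_def)
  then have "(w-1)^2 * b_n (Suc n) w = (w-1)^2 * b_n n w + (w-1)^2 * real (Suc n) * w^Suc n"
    by (simp add: algebra_simps)
  also have "\<dots> = w^Suc n * (real n * w - real n - 1) + w + (w-1)^2 * real (Suc n) * w^Suc n"
    using Suc by simp
  also have "\<dots> = w^Suc (Suc n) * (real (Suc n) * w - real (Suc n) - 1) + w"
    by (simp add: algebra_simps power2_eq_square)
  finally show ?case .
qed

lemma c_closed: "(w-1)^3 * c_n n w = w^Suc n * ((real n)^2*w^2 - (2*(real n)^2 + 2*real n - 1)*w + (real n+1)^2) - w*(w+1)"
proof (induction n)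
  case 0 then show ?case by (simp add: c_n_def algebra_simps power2_eq_square)
next
  case (Suc n)
  have "c_n (Suc n) w = c_n n w + (real (Suc n))^2 * w^Suc n" by (simp add: c_n_def)
  then have "(w-1)^3 * c_n (Suc n) w = (w-1)^3 * c_n n w + (w-1)^3 * (real (Suc n))^2 * w^Suc n"
    by (simp add: algebra_simps)
  also have "\<dots> = w^Suc n * ((real n)^2*w^2 - (2*(real n)^2 + 2*real n - 1)*w + (real n+1)^2) - w*(w+1) + (w-1)^3 * (real (Suc n))^2 * w^Suc n"
    using Suc by simp
  also have "\<dots> = w^Suc (Suc n) * ((real (Suc n))^2*w^2 - (2*(real (Suc n))^2 + 2*real (Suc n) - 1)*w + (real (Suc n)+1)^2) - w*(w+1)"
    by (simp add: algebra_simps power2_eq_square power3_eq_cube)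
  finally show ?case .
qed

lemma var_id: "(w-1)^4 * (a_n n w * c_n n w - (b_n n w)^2) = w*(w^Suc n-1)^2 - (real n+1)^2*w^Suc n*(w-1)^2"
proof -
  have "(w-1)^4 * (a_n n w * c_n n w - (b_n n w)^2) = ((w-1)*a_n n w) * ((w-1)^3 * c_n n w) - ((w-1)^2 * b_n n w)^2"
    by (simp add: algebra_simps power2_eq_square power3_eq_cube power4_eq_xxxx)
  also have "\<dots> = w*(w^Suc n-1)^2 - (real n+1)^2*w^Suc n*(w-1)^2"
    unfolding a_closed b_closed c_closed
    by (simp add: algebra_simps power2_eq_square)
  finally show ?thesis .
qed


lemma a_pos: "w > 0 \<Longrightarrow> a_n n w > 0"
  unfolding a_n_def by (intro sum_pos) auto

lemma c_nonneg: "w > 0 \<Longrightarrow> c_n n w \<ge> 0"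
  unfolding c_n_def by (intro sum_nonneg) auto

lemma c_le: "w > 0 \<Longrightarrow> c_n n w \<le> (real n)^2 * a_n n w"
  unfolding c_n_def a_n_def sum_distrib_left
  by (intro sum_mono mult_right_mono power_mono) auto

lemma V_alg:
  fixes w t Y X k :: real
  assumes "t \<noteq> 0" "Y \<noteq> 0"
  shows "((w*Y^2 - k*X*t^2)/t^4) / (Y/t)^2 = w/t^2 - k*X/Y^2"
  using assms by (simp add: field_simps power2_eq_square power4_eq_xxxx)

lemma V_eq:
  assumes w: "w > 1"
  shows "(a_n n w * c_n n w - (b_n n w)^2) / (a_n n w)^2
        = w/(w-1)^2 - (real n+1)^2*w^Suc n/(w^Suc n-1)^2"
proof -
  define X where "X = w^Suc n"
  have X1: "X > 1" unfolding X_def using one_less_power[of w "Suc n"] w by simp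
  have A: "a_n n w = (X-1)/(w-1)" using a_closed[of w n] w unfolding X_def
    by (simp add: field_simps)
  have D: "a_n n w * c_n n w - (b_n n w)^2 = (w*(X-1)^2 - (real n+1)^2*X*(w-1)^2)/(w-1)^4"
    using var_id[of w n] w unfolding X_def by (simp add: field_simps)
  have "(a_n n w * c_n n w - (b_n n w)^2) / (a_n n w)^2
     = ((w*(X-1)^2 - (real n+1)^2*X*(w-1)^2)/(w-1)^4) / ((X-1)/(w-1))^2"
    by (subst D, subst A, rule refl)
  also have "\<dots> = w/(w-1)^2 - (real n+1)^2*X/(X-1)^2" using w X1
    by (intro V_alg) auto
  finally show ?thesis unfolding X_def .
qed

lemma F_upper:
  assumes w: "w > 1"
  shows "F_n n w \<le> real n / (2*(w-1))"
proof -
  define p where "p = 1 / (2 * sqrt w)"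
  define q where "q = sqrt (c_n n w / a_n n w)"
  define r where "r = sqrt ((a_n n w * c_n n w - (b_n n w)^2) / (w * (a_n n w)^2))"
  have F: "F_n n w = p*q*r" unfolding F_n_def p_def q_def r_def by simp
  have apos: "a_n n w > 0" using a_pos w by simp
  have p0: "p > 0" and p1: "p \<le> 1/2" unfolding p_def using w by (auto simp: field_simps)
  have q0: "q \<ge> 0" unfolding q_def using c_nonneg[of w n] apos w by simp
  have "c_n n w / a_n n w \<le> (real n)^2" using c_le[of w n] apos w by (simp add: field_simps)
  then have qn: "q \<le> real n" unfolding q_def using real_sqrt_le_mono by fastforce
  have "(a_n n w * c_n n w - (b_n n w)^2) / (w * (a_n n w)^2)
      = ((a_n n w * c_n n w - (b_n n w)^2) / (a_n n w)^2) / w" by simp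
  also have "\<dots> = (w/(w-1)^2 - (real n+1)^2*w^Suc n/(w^Suc n-1)^2) / w"
    using V_eq[OF w] by simp
  also have "\<dots> \<le> (w/(w-1)^2) / w"
    using w by (intro divide_right_mono) auto
  also have "\<dots> = 1/(w-1)^2" using w by simp
  also have "\<dots> = (1/(w-1))^2" by (simp add: power_one_over)
  finally have "r \<le> sqrt ((1/(w-1))^2)" unfolding r_def using real_sqrt_le_mono by blast
  then have r1: "r \<le> 1/(w-1)" using w by simp
  have "p*q*r \<le> p*q*(1/(w-1))" using r1 p0 q0 by (intro mult_left_mono) auto
  also have "\<dots> \<le> (1/2) * real n * (1/(w-1))"
    using p0 p1 q0 qn w by (intro mult_right_mono mult_mono) auto
  finally show ?thesis unfolding F by simp
qed

lemma F_lower: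
  assumes w: "w > 1" and w1: "w - 1 \<le> 1" and X2: "2 \<le> w^Suc n"
    and dX: "4*(real n+1)^2/w^Suc n \<le> d" and d1: "d \<le> 1" and tn: "1/(w-1) \<le> real n"
  shows "(real n - 1/(w-1))*(1-d)/(2*w*(w-1)) \<le> F_n n w"
proof -
  define t where "t = w - 1"
  define X where "X = w^Suc n"
  have t0: "t > 0" and t1: "t \<le> 1" using w w1 by (auto simp: t_def)
  have X2': "X \<ge> 2" using X2 by (simp add: X_def)
  define p where "p = 1 / (2 * sqrt w)"
  define q where "q = sqrt (c_n n w / a_n n w)"
  define r where "r = sqrt ((a_n n w * c_n n w - (b_n n w)^2) / (w * (a_n n w)^2))"
  define V where "V = (a_n n w * c_n n w - (b_n n w)^2) / (a_n n w)^2"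
  have F: "F_n n w = p*q*r" unfolding F_n_def p_def q_def r_def by simp
  have apos: "a_n n w > 0" using a_pos w by simp
  have d0: "d \<ge> 0" using dX X2 by (smt (verit) divide_nonneg_pos zero_le_power2)
  have "(X-1)^2 \<ge> (X/2)^2" using X2' by (intro power_mono) auto
  then have "X/(X-1)^2 \<le> X/(X/2)^2" using X2'
    by (intro divide_left_mono) auto
  also have "\<dots> = 4/X" using X2' by (simp add: field_simps power2_eq_square)
  finally have "(real n+1)^2 * (X/(X-1)^2) \<le> (real n+1)^2 * (4/X)"
    by (intro mult_left_mono) auto
  moreover have "(real n+1)^2 * (4/X) = 4*(real n+1)^2/X" by simp
  moreover have "(real n+1)^2*X/(X-1)^2 = (real n+1)^2 * (X/(X-1)^2)" by simp
  moreover have "4*(real n+1)^2/X \<le> d" using dX unfolding X_def .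
  ultimately have delta: "(real n+1)^2*X/(X-1)^2 \<le> d" by linarith
  have VE: "V = w/t^2 - (real n+1)^2*X/(X-1)^2"
    unfolding V_def t_def X_def using V_eq[OF w] by simp
  have "w/t^2 \<ge> 1/t^2" using w by (intro divide_right_mono) auto
  then have V1: "V \<ge> 1/t^2 - d" using VE delta by linarith
  have tt: "1/t^2 \<ge> 1" using t0 t1 by (simp add: field_simps power_le_one)
  have "1/t^2 - d - (1-d)^2/t^2 = d*(2-d)*(1/t^2) - d" using t0 by (simp add: field_simps power2_eq_square)
  also have "\<dots> \<ge> d*(2-d)*1 - d" using tt d0 d1 by (intro diff_right_mono mult_left_mono) auto
  finally have "1/t^2 - d - (1-d)^2/t^2 \<ge> d*(1-d)" by (simp add: algebra_simps power2_eq_square)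
  moreover have "d*(1-d) \<ge> 0" using d0 d1 by simp
  ultimately have V2: "V \<ge> ((1-d)/t)^2" using V1 by (simp add: power_divide)
  have "r = sqrt (V / w)" unfolding r_def V_def by (simp add: field_simps)
  also have "\<dots> \<ge> sqrt (((1-d)/t)^2 / w)" using V2 w by (intro real_sqrt_le_mono divide_right_mono) auto
  also have "sqrt (((1-d)/t)^2 / w) = ((1-d)/t) / sqrt w" using d1 t0 w by (simp add: real_sqrt_divide)
  finally have rl: "r \<ge> ((1-d)/t) / sqrt w" .
  have "t^2 * (b_n n w - a_n n w * (real n - 1/t)) = (t^2 * b_n n w) - (t * a_n n w) * (real n * t - 1)"
    using t0 by (simp add: field_simps power2_eq_square)
  also have "\<dots> = (X*(real n*w - real n - 1) + w) - (X - 1)*(real n*t-1)"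
    using b_closed[of w n] a_closed[of w n] unfolding t_def X_def by simp
  also have "\<dots> = (real n + 1) * t" unfolding t_def by (simp add: algebra_simps)
  finally have "t^2 * (b_n n w - a_n n w * (real n - 1/t)) \<ge> 0" using t0 by simp
  then have bge: "b_n n w \<ge> a_n n w * (real n - 1/t)" using t0
    by (simp add: zero_le_mult_iff)
  have ba: "b_n n w / a_n n w \<ge> real n - 1/t" using bge apos by (simp add: field_simps)
  have "V = c_n n w / a_n n w - (b_n n w / a_n n w)^2" unfolding V_def using apos
    by (simp add: field_simps power2_eq_square)
  then have "c_n n w / a_n n w \<ge> (b_n n w / a_n n w)^2" using V2
    by (smt (verit) zero_le_power2)
  then have "q \<ge> sqrt ((b_n n w / a_n n w)^2)" unfolding q_def using real_sqrt_le_mono by blast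
  then have "q \<ge> \<bar>b_n n w / a_n n w\<bar>" by simp
  then have ql: "q \<ge> real n - 1/t" using ba by linarith
  have n0: "real n - 1/t \<ge> 0" using tn t_def by simp
  have p0: "p > 0" unfolding p_def using w by simp
  have "p * (real n - 1/t) * (((1-d)/t) / sqrt w) \<le> p * q * r"
    using ql rl p0 n0 d1 t0 w by (intro mult_mono mult_left_mono) auto
  moreover have "p * (real n - 1/t) * (((1-d)/t) / sqrt w) = (real n - 1/t)*(1-d)/(2*(sqrt w * sqrt w)*t)"
    unfolding p_def by (simp add: field_simps)
  moreover have "sqrt w * sqrt w = w" using w by simp
  ultimately have "(real n - 1/t)*(1-d)/(2*w*t) \<le> p * q * r" by simp
  then show ?thesis unfolding F t_def by simp
qed


lemma F_cont: "continuous_on {1..} (F_n n)"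
proof -
  have a: "continuous_on {1..} (a_n n)" unfolding a_n_def by (intro continuous_intros)
  have b: "continuous_on {1..} (b_n n)" unfolding b_n_def by (intro continuous_intros)
  have c: "continuous_on {1..} (c_n n)" unfolding c_n_def by (intro continuous_intros)
  have ap: "\<And>w. w \<in> {1..} \<Longrightarrow> a_n n w \<noteq> 0" using a_pos by (metis atLeast_iff less_le_trans not_less_iff_gr_or_eq zero_less_one)
  show ?thesis unfolding F_n_def
    by (intro continuous_intros a b c) (use ap in \<open>auto\<close>)
qed

lemma int_inv:
  fixes t1 t2 c :: real
  assumes "0 < t1" "t1 \<le> t2"
  shows "((\<lambda>w. c/(w-1)) has_integral (c*(ln t2 - ln t1))) {1+t1..1+t2}"
proof -
  have "((\<lambda>w. c/(w-1)) has_integral ((\<lambda>w. c*ln(w-1)) (1+t2) - (\<lambda>w. c*ln(w-1)) (1+t1))) {1+t1..1+t2}"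
  proof (rule fundamental_theorem_of_calculus)
    show "1+t1 \<le> 1+t2" using assms by simp
  next
    fix x assume x: "x \<in> {1+t1..1+t2}"
    then have "x > 1" using assms by auto
    then have "((\<lambda>w. c*ln(w-1)) has_real_derivative (c*(1/(x-1)))) (at x)"
      by (auto intro!: derivative_eq_intros)
    then show "((\<lambda>w. c*ln(w-1)) has_vector_derivative (c/(x-1))) (at x within {1+t1..1+t2})"
      by (simp add: has_real_derivative_iff_has_vector_derivative has_vector_derivative_at_within)
  qed
  then show ?thesis by (simp add: algebra_simps)
qed

lemma lim1: "(\<lambda>n::nat. (ln (real n) - 3*ln (ln (real n)))/ln (real n)) \<longlonglongrightarrow> 1"
  by real_asymp

lemma lim2: "(\<lambda>n::nat. (1 - 1/(ln (real n))^2)*(1 - 4*(real n+1)^2/exp((ln (real n))^2/2))/(1 + 1/ln (real n))) \<longlonglongrightarrow> 1"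
  by real_asymp

lemma ev1: "eventually (\<lambda>n::nat. 2 \<le> ln (real n)) sequentially" by real_asymp
lemma ev2: "eventually (\<lambda>n::nat. (ln (real n))^3 < real n) sequentially" by real_asymp
lemma ev3: "eventually (\<lambda>n::nat. 4*(real n+1)^2/exp((ln (real n))^2/2) \<le> 1) sequentially" by real_asymp
lemma ev4: "eventually (\<lambda>n::nat. 2 \<le> exp((ln (real n))^2/2)) sequentially" by real_asymp


lemma int_bounds:
  fixes n :: nat
  defines "L \<equiv> ln (real n)"
  defines "d \<equiv> 4*(real n+1)^2/exp(L^2/2)"
  defines "I \<equiv> {1 + L^2 / real n .. 1 + 1 / L}"
  assumes L2: "2 \<le> L" and c3: "L^3 < real n" and dd: "d \<le> 1" and e2: "2 \<le> exp(L^2/2)"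
  shows "(1 - 1/L^2)*(1 - d)/(1 + 1/L) * (real n/2 * (L - 3*ln L)) \<le> integral I (F_n n)"
    and "integral I (F_n n) \<le> real n/2 * (L - 3*ln L)"
proof -
  define t1 where "t1 = L^2 / real n"
  define t2 where "t2 = 1 / L"
  define K where "K = (1 - 1/L^2)*(1 - d)/(1 + 1/L)"
  have L0: "L > 0" using L2 by simp
  have n0: "real n > 0" using c3 zero_less_power[OF L0, of 3] by linarith
  have t10: "t1 > 0" unfolding t1_def using n0 L0 by simp
  have t12: "t1 \<le> t2" unfolding t1_def t2_def using c3 n0 L0
    by (simp add: field_simps power3_eq_cube power2_eq_square)
  have t2h: "t2 \<le> 1/2" unfolding t2_def using L2 by (simp add: field_simps)
  have I: "I = {1+t1..1+t2}" unfolding I_def t1_def t2_def by simp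
  have lnd: "ln t2 - ln t1 = L - 3 * ln L" unfolding t1_def t2_def using n0 L0
    by (simp add: ln_div ln_mult L_def[symmetric] power2_eq_square)
  have Fint: "F_n n integrable_on I" unfolding I
    by (rule integrable_continuous_real, rule continuous_on_subset[OF F_cont]) (use t10 in auto)
  have up: "((\<lambda>w. (real n/2)/(w-1)) has_integral ((real n/2)*(ln t2 - ln t1))) I"
    unfolding I by (rule int_inv[OF t10 t12])
  have lo: "((\<lambda>w. (K*(real n/2))/(w-1)) has_integral ((K*(real n/2))*(ln t2 - ln t1))) I"
    unfolding I by (rule int_inv[OF t10 t12])
  have "integral I (F_n n) \<le> integral I (\<lambda>w. (real n/2)/(w-1))"
  proof (rule integral_le[OF Fint])
    show "(\<lambda>w. (real n/2)/(w-1)) integrable_on I" using up by blast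
    fix w assume "w \<in> I"
    then have "w > 1" unfolding I using t10 by auto
    then show "F_n n w \<le> (real n/2)/(w-1)" using F_upper[of w n] by simp
  qed
  also have "\<dots> = real n/2 * (L - 3*ln L)" using up lnd by (simp add: integral_unique)
  finally show "integral I (F_n n) \<le> real n/2 * (L - 3*ln L)" .
  have d0: "d \<ge> 0" unfolding d_def by simp
  have LL: "1 \<le> L^2" using mult_mono[of 1 L 1 L] L2 by (simp add: power2_eq_square)
  have KL: "1 - 1/L^2 \<ge> 0" using LL by (simp add: divide_le_eq_1)
  have "integral I (\<lambda>w. (K*(real n/2))/(w-1)) \<le> integral I (F_n n)"
  proof (rule integral_le[OF _ Fint])
    show "(\<lambda>w. (K*(real n/2))/(w-1)) integrable_on I" using lo by blast
    fix w assume "w \<in> I"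
    then have wt: "t1 \<le> w - 1" "w - 1 \<le> t2" unfolding I by auto
    define t where "t = w - 1"
    have t0: "t > 0" using wt t10 by (simp add: t_def)
    have w1: "w > 1" using t0 t_def by simp
    have "t - t^2 \<le> ln (1 + t)" using t0 wt t2h by (intro ln_one_plus_pos_lower_bound) (auto simp: t_def)
    moreover have "t^2 \<le> t/2"
    proof -
      have "t*t \<le> t*(1/2)" using t0 wt t2h by (intro mult_left_mono) (auto simp: t_def)
      then show ?thesis by (simp add: power2_eq_square)
    qed
    ultimately have lnw: "ln w \<ge> t/2" unfolding t_def by simp
    have "real n * t \<ge> real n * t1" using wt n0 by (simp add: t_def)
    also have "real n * t1 = L^2" unfolding t1_def using n0 by simp
    finally have "real n * (t/2) \<ge> L^2/2" by simp
    also have "real n * (t/2) \<le> real n * ln w" using lnw n0 by simp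
    finally have "exp (L^2/2) \<le> exp (real n * ln w)" by simp
    also have "exp (real n * ln w) = w^n" using w1 by (simp add: exp_of_nat_mult)
    also have "w^n \<le> w^Suc n" using w1 by simp
    finally have X: "exp (L^2/2) \<le> w^Suc n" .
    have X2: "2 \<le> w^Suc n" using X e2 by simp
    have dX: "4*(real n+1)^2/w^Suc n \<le> d" unfolding d_def
      using X e2 by (intro divide_left_mono) auto
    have tt1: "1/t \<le> 1/t1" using t0 t10 wt by (simp add: t_def field_simps)
    have "1/t1 = real n / L^2" unfolding t1_def by simp
    also have "\<dots> \<le> real n" using LL n0 by (simp add: divide_le_eq mult_le_cancel_left1)
    finally have tn: "1/(w-1) \<le> real n" using tt1 t_def by simp
    have Fl: "(real n - 1/(w-1))*(1-d)/(2*w*(w-1)) \<le> F_n n w"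
      using F_lower[OF w1 _ X2 dX dd tn] wt t2h by simp
    have A: "real n * (1 - 1/L^2) \<le> real n - 1/(w-1)"
      using tt1 \<open>1/t1 = real n / L^2\<close> n0 by (simp add: t_def algebra_simps)
    have "(real n * (1 - 1/L^2))*(1-d)/(2*(1+1/L)*(w-1)) \<le> (real n - 1/(w-1))*(1-d)/(2*w*(w-1))"
    proof (rule frac_le)
      show "0 \<le> (real n - 1/(w-1))*(1-d)" using tn dd by simp
      show "real n * (1 - 1/L^2) * (1-d) \<le> (real n - 1/(w-1))*(1-d)"
        using A dd by (intro mult_right_mono) auto
      show "0 < 2*w*(w-1)" using w1 by simp
      show "2*w*(w-1) \<le> 2*(1+1/L)*(w-1)" using wt w1 unfolding t2_def by simp
    qed
    moreover have "(K*(real n/2))/(w-1) = (real n * (1 - 1/L^2))*(1-d)/(2*(1+1/L)*(w-1))"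
      unfolding K_def by (simp add: field_simps)
    ultimately show "(K*(real n/2))/(w-1) \<le> F_n n w" using Fl by simp
  qed
  moreover have "integral I (\<lambda>w. (K*(real n/2))/(w-1)) = K * (real n/2 * (L - 3*ln L))"
    using lo lnd by (simp add: integral_unique)
  ultimately show "(1 - 1/L^2)*(1 - d)/(1 + 1/L) * (real n/2 * (L - 3*ln L)) \<le> integral I (F_n n)"
    unfolding K_def by simp
qed


theorem proposition3p2:
  shows "(\<lambda>n::nat. integral {1 + (ln (real n))^2 / real n .. 1 + 1 / ln (real n)} (F_n n))
           \<sim>[sequentially] (\<lambda>n. (1/2) * real n * ln (real n))"
proof (rule asymp_equivI')
  define J where "J = (\<lambda>n::nat. integral {1 + (ln (real n))^2 / real n .. 1 + 1 / ln (real n)} (F_n n))"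
  define Q where "Q = (\<lambda>n::nat. (ln (real n) - 3*ln (ln (real n)))/ln (real n))"
  define K where "K = (\<lambda>n::nat. (1 - 1/(ln (real n))^2)*(1 - 4*(real n+1)^2/exp((ln (real n))^2/2))/(1 + 1/ln (real n)))"
  have QK: "(\<lambda>n. K n * Q n) \<longlonglongrightarrow> 1 * 1"
    unfolding K_def Q_def by (intro tendsto_mult lim1 lim2)
  have ev: "eventually (\<lambda>n. K n * Q n \<le> J n / ((1/2) * real n * ln (real n))
               \<and> J n / ((1/2) * real n * ln (real n)) \<le> Q n) sequentially"
    using ev1 ev2 ev3 ev4
  proof eventually_elim
    case (elim n)
    note B = int_bounds[OF elim]
    have L0: "ln (real n) > 0" using elim(1) by simp
    have n0: "real n > 0" using elim(2) zero_less_power[OF L0, of 3] by linarith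
    have P: "(1/2) * real n * ln (real n) > 0" using L0 n0 by simp
    have e1: "real n/2 * (ln (real n) - 3*ln (ln (real n))) = Q n * ((1/2) * real n * ln (real n))"
      unfolding Q_def using L0 n0 by (simp add: divide_simps)
    have "K n * Q n * ((1/2) * real n * ln (real n)) \<le> J n"
    proof -
      have "K n * Q n * ((1/2) * real n * ln (real n)) = K n * (real n/2 * (ln (real n) - 3*ln (ln (real n))))"
        unfolding e1 by (simp only: mult.assoc)
      moreover have "K n * (real n/2 * (ln (real n) - 3*ln (ln (real n)))) \<le> J n"
        unfolding K_def J_def by (rule B(1))
      ultimately show ?thesis by linarith
    qed
    moreover have "J n \<le> Q n * ((1/2) * real n * ln (real n))"
      using B(2) unfolding J_def e1 by simp
    ultimately show ?case using P by (simp add: pos_le_divide_eq pos_divide_le_eq)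
  qed
  have E1: "eventually (\<lambda>n. K n * Q n \<le> J n / ((1/2) * real n * ln (real n))) sequentially"
    using ev by (rule eventually_mono) auto
  have E2: "eventually (\<lambda>n. J n / ((1/2) * real n * ln (real n)) \<le> Q n) sequentially"
    using ev by (rule eventually_mono) auto
  have QK': "(\<lambda>n. K n * Q n) \<longlonglongrightarrow> 1" using QK by simp
  have "(\<lambda>n. J n / ((1/2) * real n * ln (real n))) \<longlonglongrightarrow> 1"
    by (rule tendsto_sandwich[OF E1 E2 QK' lim1[folded Q_def]])
  then show "((\<lambda>n. integral {1 + (ln (real n))^2 / real n .. 1 + 1 / ln (real n)} (F_n n) / ((1/2) * real n * ln (real n))) \<longlongrightarrow> 1) sequentially"
    unfolding J_def .
qed

end
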